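(* Let $G\in\mathcal{G}$ and $x\in[v^{\min},v^{\max}]$. The function $\Psi_x(b)=G(b)(x-b)+\widehat G(b)$ on $[v^{\min},v^{\max}]$ (the agent's expected utility in Mechanism 2 from bidding $b$ when his value is $x$) attains its maximum at $b=x$, with maximum value $\widehat G(x)$. Consequently, in Mechanism 2 an agent who knows $v_a$ obtains optimal expected utility $E[\widehat G(v_a)]$ by bidding $v_a$, and an agent who knows only the prior obtains optimal utility $\widehat G(E[v_a])$ by bidding $E[v_a]$; and there exists $G\in\mathcal{G}$ with $E[\widehat G(v_a)]-\widehat G(E[v_a])>c$ if and only if $c<E[\max(0,v_a-E[v_a])]$, the point mass at $E[v_a]$ being such a $G$ in that case.
   Context: $\mathcal{G}$ is the set of cdfs of probability measures on $[v^{\min},v^{\max}]$, $0\le v^{\min}<v^{\max}$, and $\widehat G(b)=\int_{v^{\min}}^bG(r)\,dr$. The agent's value $v_a$ is a random variable supported in $[v^{\min},v^{\max}]$; he can learn it at cost $c\ge0$. Mechanism 2 (parameter $G$): the agent bids $b\in[v^{\min},v^{\max}]$; with probability $G(b)$ the agent buys the object at price $b-\widehat G(b)/G(b)$; otherwise nothing happens. The agent is risk-neutral with quasi-linear utility. *)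

theory Defs
  imports "HOL-Probability.Probability"
begin

definition cdf_class :: "real \<Rightarrow> real \<Rightarrow> (real \<Rightarrow> real) set" where
  "cdf_class vmin vmax =
     {G. \<exists>\<mu>. prob_space \<mu> \<and> sets \<mu> = sets borel \<and> measure \<mu> {vmin..vmax} = 1 \<and> G = cdf \<mu>}"

definition Ghat :: "real \<Rightarrow> (real \<Rightarrow> real) \<Rightarrow> real \<Rightarrow> real" where
  "Ghat vmin G b = integral {vmin..b} G"

definition Psi :: "real \<Rightarrow> (real \<Rightarrow> real) \<Rightarrow> real \<Rightarrow> real \<Rightarrow> real" where
  "Psi vmin G x b = G b * (x - b) + Ghat vmin G b"

end

theory Submission
  imports Defs
begin


lemma cdf_class_props:
  assumes "G \<in> cdf_class vmin vmax"
  shows "mono G" "\<And>x. 0 \<le> G x" "\<And>x. G x \<le> 1"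
proof -
  obtain \<mu> where "prob_space \<mu>" "sets \<mu> = sets borel" "G = cdf \<mu>"
    using assms unfolding cdf_class_def by auto
  then interpret real_distribution \<mu> by (simp add: real_distribution_def real_distribution_axioms_def)
  show "mono G" using \<open>G = cdf \<mu>\<close> cdf_nondecreasing by (simp add: mono_def)
  show "\<And>x. 0 \<le> G x" using \<open>G = cdf \<mu>\<close> cdf_nonneg by simp
  show "\<And>x. G x \<le> 1" using \<open>G = cdf \<mu>\<close> cdf_bounded_prob by simp
qed

lemma G_int: "mono (G::real\<Rightarrow>real) \<Longrightarrow> G integrable_on {a..b}"
  by (rule integrable_on_mono_on) (simp add: mono_on_def mono_def)

lemma int_bounds:
  fixes G :: "real \<Rightarrow> real"
  assumes "mono G" "a \<le> b"
  shows "G a * (b-a) \<le> integral {a..b} G" "integral {a..b} G \<le> G b * (b-a)"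
proof -
  have "integral {a..b} (\<lambda>_. G a) \<le> integral {a..b} G"
    by (rule integral_le) (use assms G_int monoD in auto)
  then show "G a * (b-a) \<le> integral {a..b} G" using assms by (simp add: mult.commute)
  have "integral {a..b} G \<le> integral {a..b} (\<lambda>_. G b)"
    by (rule integral_le) (use assms G_int monoD in auto)
  then show "integral {a..b} G \<le> G b * (b-a)" using assms by (simp add: mult.commute)
qed

lemma Ghat_diff:
  fixes G :: "real \<Rightarrow> real"
  assumes "mono G" "vmin \<le> a" "a \<le> b"
  shows "Ghat vmin G b - Ghat vmin G a = integral {a..b} G"
  using Henstock_Kurzweil_Integration.integral_combine[OF assms(2,3) G_int[OF assms(1)]] unfolding Ghat_def by simp

lemma Psi_le:
  fixes G :: "real \<Rightarrow> real"
  assumes "mono G" "vmin \<le> x" "vmin \<le> b"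
  shows "Psi vmin G x b \<le> Ghat vmin G x"
proof (cases "b \<le> x")
  case True
  then show ?thesis using Ghat_diff[OF assms(1) assms(3) True] int_bounds[OF assms(1) True]
    unfolding Psi_def by (simp add: algebra_simps)
next
  case False
  then have xb: "x \<le> b" by simp
  show ?thesis using Ghat_diff[OF assms(1) assms(2) xb] int_bounds[OF assms(1) xb]
    unfolding Psi_def by (simp add: algebra_simps)
qed

lemma Ghat_mono:
  fixes G :: "real \<Rightarrow> real"
  assumes "mono G" "\<And>x. 0 \<le> G x"
  shows "mono (Ghat vmin G)"
proof (rule monoI)
  fix a b :: real assume ab: "a \<le> b"
  show "Ghat vmin G a \<le> Ghat vmin G b"
  proof (cases "b < vmin")
    case True then show ?thesis using ab by (simp add: Ghat_def)
  next
    case False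
    have nn: "0 \<le> integral {c..d} G" for c d
      by (rule integral_nonneg) (use assms G_int in auto)
    show ?thesis
    proof (cases "a < vmin")
      case True then show ?thesis using nn by (simp add: Ghat_def)
    next
      case False then show ?thesis using Ghat_diff[OF assms(1), of vmin a b] ab nn[of a b] by force
    qed
  qed
qed

lemma Ghat_lip:
  fixes G :: "real \<Rightarrow> real"
  assumes "mono G" "\<And>x. 0 \<le> G x" "\<And>x. G x \<le> 1" "vmin \<le> a" "vmin \<le> b"
  shows "Ghat vmin G b - Ghat vmin G a \<le> max 0 (b-a)"
proof (cases "a \<le> b")
  case True
  have "G b * (b - a) \<le> 1 * (b - a)" using True assms(3)[of b] by (intro mult_right_mono) auto
  then show ?thesis using Ghat_diff[OF assms(1,4) True] int_bounds(2)[OF assms(1) True] by simp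
next
  case False
  then show ?thesis using Ghat_mono[OF assms(1,2), of vmin] by (auto simp: mono_def)
qed

lemma Ghat_bounds:
  fixes G :: "real \<Rightarrow> real"
  assumes "mono G" "\<And>x. 0 \<le> G x" "\<And>x. G x \<le> 1" "vmin \<le> x"
  shows "0 \<le> Ghat vmin G x" "Ghat vmin G x \<le> x - vmin"
proof -
  have "Ghat vmin G vmin = 0" by (simp add: Ghat_def)
  then show "0 \<le> Ghat vmin G x" using Ghat_mono[OF assms(1,2), of vmin] assms(4) by (metis monoD)
  show "Ghat vmin G x \<le> x - vmin" using Ghat_lip[OF assms(1-3) order_refl assms(4)] \<open>Ghat vmin G vmin = 0\<close> assms(4)
    by simp
qed

lemma point_mass:
  fixes m vmin vmax :: real
  assumes "vmin \<le> m" "m \<le> vmax"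
  shows "cdf (return borel m) \<in> cdf_class vmin vmax"
    "\<And>b. Ghat vmin (cdf (return borel m)) b = max 0 (b - m)"
proof -
  have ps: "prob_space (return borel m)" by (rule prob_space_return) simp
  have eq: "cdf (return borel m) r = (if r \<in> {m..} then 1 else 0)" for r
    by (simp add: cdf_def measure_return indicator_def)
  show "cdf (return borel m) \<in> cdf_class vmin vmax"
    unfolding cdf_class_def using ps assms by (auto simp: measure_return)
  fix b
  have "Ghat vmin (cdf (return borel m)) b = integral {vmin..b} (\<lambda>r. if r \<in> {m..} then 1 else 0)"
    unfolding Ghat_def eq ..
  also have "\<dots> = integral ({m..} \<inter> {vmin..b}) (\<lambda>_. 1::real)"
    by (rule integral_restrict_Int)
  also have "{m..} \<inter> {vmin..b} = {m..b}" using assms by auto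
  finally show "Ghat vmin (cdf (return borel m)) b = max 0 (b - m)" by simp
qed


lemma Psi_abs:
  fixes G :: "real \<Rightarrow> real"
  assumes "mono G" "\<And>x. 0 \<le> G x" "\<And>x. G x \<le> 1" "x \<in> {vmin..vmax}" "b \<in> {vmin..vmax}"
  shows "\<bar>Psi vmin G x b\<bar> \<le> 2 * (vmax - vmin)"
proof -
  have "\<bar>G b * (x - b)\<bar> = G b * \<bar>x - b\<bar>" using assms(2) by (simp add: abs_mult)
  also have "\<dots> \<le> \<bar>x - b\<bar>" using assms(2,3) by (intro mult_left_le_one_le) auto
  finally have "\<bar>G b * (x - b)\<bar> \<le> vmax - vmin" using assms(4,5) by auto
  moreover have "0 \<le> Ghat vmin G b" "Ghat vmin G b \<le> b - vmin"
    using Ghat_bounds[OF assms(1-3)] assms(5) by auto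
  ultimately show ?thesis using assms(5) unfolding Psi_def by auto
qed

theorem mainTheorem7:
  fixes vmin vmax c :: real and M :: "'a measure" and v :: "'a \<Rightarrow> real"
  assumes "0 \<le> vmin" "vmin < vmax" "0 \<le> c"
    and "prob_space M" "v \<in> borel_measurable M"
    and "\<forall>\<omega>\<in>space M. v \<omega> \<in> {vmin..vmax}"
  shows
    "(\<forall>G\<in>cdf_class vmin vmax. \<forall>x\<in>{vmin..vmax}.
        (\<forall>b\<in>{vmin..vmax}. Psi vmin G x b \<le> Psi vmin G x x) \<and> Psi vmin G x x = Ghat vmin G x)
   \<and> (\<forall>G\<in>cdf_class vmin vmax.
        (\<forall>\<beta>\<in>borel_measurable borel. (\<forall>x\<in>{vmin..vmax}. \<beta> x \<in> {vmin..vmax}) \<longrightarrow>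
            integral\<^sup>L M (\<lambda>\<omega>. Psi vmin G (v \<omega>) (\<beta> (v \<omega>))) \<le> integral\<^sup>L M (\<lambda>\<omega>. Ghat vmin G (v \<omega>)))
        \<and> integral\<^sup>L M (\<lambda>\<omega>. Psi vmin G (v \<omega>) (v \<omega>)) = integral\<^sup>L M (\<lambda>\<omega>. Ghat vmin G (v \<omega>)))
   \<and> (\<forall>G\<in>cdf_class vmin vmax.
        (\<forall>b\<in>{vmin..vmax}. integral\<^sup>L M (\<lambda>\<omega>. Psi vmin G (v \<omega>) b) \<le> Ghat vmin G (integral\<^sup>L M v))
        \<and> integral\<^sup>L M v \<in> {vmin..vmax}
        \<and> integral\<^sup>L M (\<lambda>\<omega>. Psi vmin G (v \<omega>) (integral\<^sup>L M v)) = Ghat vmin G (integral\<^sup>L M v))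
   \<and> ((\<exists>G\<in>cdf_class vmin vmax.
          integral\<^sup>L M (\<lambda>\<omega>. Ghat vmin G (v \<omega>)) - Ghat vmin G (integral\<^sup>L M v) > c)
      \<longleftrightarrow> c < integral\<^sup>L M (\<lambda>\<omega>. max 0 (v \<omega> - integral\<^sup>L M v)))
   \<and> (c < integral\<^sup>L M (\<lambda>\<omega>. max 0 (v \<omega> - integral\<^sup>L M v)) \<longrightarrow>
        cdf (return borel (integral\<^sup>L M v)) \<in> cdf_class vmin vmax
        \<and> integral\<^sup>L M (\<lambda>\<omega>. Ghat vmin (cdf (return borel (integral\<^sup>L M v))) (v \<omega>))
          - Ghat vmin (cdf (return borel (integral\<^sup>L M v))) (integral\<^sup>L M v) > c)"
  
proof -
  interpret M: prob_space M by fact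
  define m where "m = integral\<^sup>L M v"
  note [measurable] = assms(5)
  have vb: "\<And>\<omega>. \<omega> \<in> space M \<Longrightarrow> vmin \<le> v \<omega> \<and> v \<omega> \<le> vmax" using assms(6) by auto
  have bint: "integrable M f" if "f \<in> borel_measurable M" "\<And>\<omega>. \<omega> \<in> space M \<Longrightarrow> \<bar>f \<omega>\<bar> \<le> B"
    for f :: "'a \<Rightarrow> real" and B
    using M.integrable_const_bound[of f B] that by (auto intro!: AE_I2)
  have vint: "integrable M v"
    by (rule bint[of _ "\<bar>vmin\<bar> + \<bar>vmax\<bar>"]) (auto dest!: vb)
  have mr: "vmin \<le> m" "m \<le> vmax" unfolding m_def
    by (rule M.integral_ge_const[OF vint], use vb in auto)
       (rule M.integral_le_const[OF vint], use vb in auto)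
  have Gfacts: "mono G \<and> (\<forall>x. 0 \<le> G x) \<and> (\<forall>x. G x \<le> 1)" if "G \<in> cdf_class vmin vmax" for G
    using cdf_class_props[OF that] by auto
  have P1: "\<forall>G\<in>cdf_class vmin vmax. \<forall>x\<in>{vmin..vmax}.
        (\<forall>b\<in>{vmin..vmax}. Psi vmin G x b \<le> Psi vmin G x x) \<and> Psi vmin G x x = Ghat vmin G x"
  proof (intro ballI conjI)
    fix G x b assume G: "G \<in> cdf_class vmin vmax" and x: "x \<in> {vmin..vmax}" and b: "b \<in> {vmin..vmax}"
    show "Psi vmin G x b \<le> Psi vmin G x x" using Psi_le[of G vmin x b] Gfacts[OF G] x b
      by (simp add: Psi_def)
  next
    fix G x show "Psi vmin G x x = Ghat vmin G x" by (simp add: Psi_def)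
  qed
  have P2: "\<forall>G\<in>cdf_class vmin vmax.
        (\<forall>\<beta>\<in>borel_measurable borel. (\<forall>x\<in>{vmin..vmax}. \<beta> x \<in> {vmin..vmax}) \<longrightarrow>
            integral\<^sup>L M (\<lambda>\<omega>. Psi vmin G (v \<omega>) (\<beta> (v \<omega>))) \<le> integral\<^sup>L M (\<lambda>\<omega>. Ghat vmin G (v \<omega>)))
        \<and> integral\<^sup>L M (\<lambda>\<omega>. Psi vmin G (v \<omega>) (v \<omega>)) = integral\<^sup>L M (\<lambda>\<omega>. Ghat vmin G (v \<omega>))"
  proof (intro ballI conjI impI)
    fix G \<beta> assume G: "G \<in> cdf_class vmin vmax" and \<beta>: "\<beta> \<in> borel_measurable borel"
      and \<beta>r: "\<forall>x\<in>{vmin..vmax}. \<beta> x \<in> {vmin..vmax}"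
    note g = Gfacts[OF G]
    have [measurable]: "G \<in> borel_measurable borel" using g borel_measurable_mono by blast
    have [measurable]: "Ghat vmin G \<in> borel_measurable borel"
      using g borel_measurable_mono Ghat_mono by blast
    note [measurable] = \<beta>
    have i1: "integrable M (\<lambda>\<omega>. Psi vmin G (v \<omega>) (\<beta> (v \<omega>)))"
    proof (rule bint[of _ "2 * (vmax - vmin)"])
      show "(\<lambda>\<omega>. Psi vmin G (v \<omega>) (\<beta> (v \<omega>))) \<in> borel_measurable M"
        unfolding Psi_def by measurable
      fix \<omega> assume "\<omega> \<in> space M"
      then show "\<bar>Psi vmin G (v \<omega>) (\<beta> (v \<omega>))\<bar> \<le> 2 * (vmax - vmin)"
        using Psi_abs[of G "v \<omega>" vmin vmax "\<beta> (v \<omega>)"] g vb[of \<omega>] \<beta>r by auto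
    qed
    have i2: "integrable M (\<lambda>\<omega>. Ghat vmin G (v \<omega>))"
      by (rule bint[of _ "vmax - vmin"], measurable)
         (use Ghat_bounds[of G] g vb in fastforce)
    show "integral\<^sup>L M (\<lambda>\<omega>. Psi vmin G (v \<omega>) (\<beta> (v \<omega>))) \<le> integral\<^sup>L M (\<lambda>\<omega>. Ghat vmin G (v \<omega>))"
      by (rule integral_mono[OF i1 i2]) (use Psi_le[of G] g vb \<beta>r in auto)
  next
    fix G show "integral\<^sup>L M (\<lambda>\<omega>. Psi vmin G (v \<omega>) (v \<omega>)) = integral\<^sup>L M (\<lambda>\<omega>. Ghat vmin G (v \<omega>))"
      by (simp add: Psi_def)
  qed
  have EPsi: "integral\<^sup>L M (\<lambda>\<omega>. Psi vmin G (v \<omega>) b) = Psi vmin G m b" for G b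
  proof -
    have "integral\<^sup>L M (\<lambda>\<omega>. Psi vmin G (v \<omega>) b)
        = integral\<^sup>L M (\<lambda>\<omega>. G b * v \<omega> + (Ghat vmin G b - G b * b))"
      by (simp add: Psi_def algebra_simps)
    also have "\<dots> = G b * m + (Ghat vmin G b - G b * b)"
      using vint by (simp add: m_def M.prob_space)
    finally show ?thesis by (simp add: Psi_def algebra_simps)
  qed
  have P3: "\<forall>G\<in>cdf_class vmin vmax.
        (\<forall>b\<in>{vmin..vmax}. integral\<^sup>L M (\<lambda>\<omega>. Psi vmin G (v \<omega>) b) \<le> Ghat vmin G m)
        \<and> m \<in> {vmin..vmax}
        \<and> integral\<^sup>L M (\<lambda>\<omega>. Psi vmin G (v \<omega>) m) = Ghat vmin G m"
  proof (intro ballI conjI)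
    fix G b assume G: "G \<in> cdf_class vmin vmax" and b: "b \<in> {vmin..vmax}"
    show "integral\<^sup>L M (\<lambda>\<omega>. Psi vmin G (v \<omega>) b) \<le> Ghat vmin G m"
      unfolding EPsi using Psi_le[of G vmin m b] Gfacts[OF G] mr b by auto
  next
    show "m \<in> {vmin..vmax}" using mr by auto
  next
    fix G show "integral\<^sup>L M (\<lambda>\<omega>. Psi vmin G (v \<omega>) m) = Ghat vmin G m"
      unfolding EPsi by (simp add: Psi_def)
  qed
  have A_def': "integral\<^sup>L M (\<lambda>\<omega>. max 0 (v \<omega> - integral\<^sup>L M v)) = integral\<^sup>L M (\<lambda>\<omega>. max 0 (v \<omega> - m))" by (simp add: m_def)
  define A where "A = integral\<^sup>L M (\<lambda>\<omega>. max 0 (v \<omega> - m))"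
  have iA: "integrable M (\<lambda>\<omega>. max 0 (v \<omega> - m))"
    by (rule bint[of _ "vmax - vmin"], measurable) (use vb mr in fastforce)
  have upper: "integral\<^sup>L M (\<lambda>\<omega>. Ghat vmin G (v \<omega>)) - Ghat vmin G m \<le> A"
    if G: "G \<in> cdf_class vmin vmax" for G
  proof -
    note g = Gfacts[OF G]
    have [measurable]: "Ghat vmin G \<in> borel_measurable borel"
      using g borel_measurable_mono Ghat_mono by blast
    have i2: "integrable M (\<lambda>\<omega>. Ghat vmin G (v \<omega>))"
      by (rule bint[of _ "vmax - vmin"], measurable)
         (use Ghat_bounds[of G] g vb in fastforce)
    have "integral\<^sup>L M (\<lambda>\<omega>. Ghat vmin G (v \<omega>)) - Ghat vmin G m
        = integral\<^sup>L M (\<lambda>\<omega>. Ghat vmin G (v \<omega>) - Ghat vmin G m)"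
      using i2 by (simp add: M.prob_space)
    also have "\<dots> \<le> A" unfolding A_def
      by (rule integral_mono) (use i2 iA Ghat_lip[of G vmin m] g vb mr in auto)
    finally show ?thesis .
  qed
  have P5: "c < A \<longrightarrow>
        cdf (return borel m) \<in> cdf_class vmin vmax
        \<and> integral\<^sup>L M (\<lambda>\<omega>. Ghat vmin (cdf (return borel m)) (v \<omega>))
          - Ghat vmin (cdf (return borel m)) m > c"
  proof (intro impI conjI)
    show "cdf (return borel m) \<in> cdf_class vmin vmax" using point_mass mr by blast
    assume "c < A"
    have "integral\<^sup>L M (\<lambda>\<omega>. Ghat vmin (cdf (return borel m)) (v \<omega>)) = A"
      unfolding A_def point_mass(2)[OF mr] ..
    then show "integral\<^sup>L M (\<lambda>\<omega>. Ghat vmin (cdf (return borel m)) (v \<omega>))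
          - Ghat vmin (cdf (return borel m)) m > c"
      using \<open>c < A\<close> point_mass(2)[OF mr] by simp
  qed
  have P4: "(\<exists>G\<in>cdf_class vmin vmax.
          integral\<^sup>L M (\<lambda>\<omega>. Ghat vmin G (v \<omega>)) - Ghat vmin G m > c) \<longleftrightarrow> c < A"
  proof
    assume "\<exists>G\<in>cdf_class vmin vmax. integral\<^sup>L M (\<lambda>\<omega>. Ghat vmin G (v \<omega>)) - Ghat vmin G m > c"
    then show "c < A" using upper by force
  next
    assume "c < A" then show "\<exists>G\<in>cdf_class vmin vmax. integral\<^sup>L M (\<lambda>\<omega>. Ghat vmin G (v \<omega>)) - Ghat vmin G m > c"
      using P5 by blast
  qed
  show ?thesis unfolding A_def' m_def[symmetric] A_def[symmetric] by (intro conjI P1 P2 P3 P4 P5)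
qed

end
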